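(* Let $M\ge1$ and let $x_{1:\infty}$ be an $M$-bounded displacement enumeration with respect to a language $K$, with arbitrary noise rate and possibly omissions. Then for any language $L\subseteq K$, $$\mu_{\rm low}(L,K)\ge\frac1M\liminf_{n\to\infty}\frac{|L\cap\{x_1,\dots,x_n\}|}{n},\qquad \mu_{\rm up}(L,K)\ge\frac1M\limsup_{n\to\infty}\frac{|L\cap\{x_1,\dots,x_n\}|}{n}.$$
   Context: The universe is $U=\mathbb{N}$ with its natural order; a language is an infinite subset of $U$, with canonical enumeration $\ell_1<\ell_2<\cdots$. For $A,B\subseteq\mathbb{N}$ with $B=\{b_1<b_2<\cdots\}$, $\mu_{\rm up}(A,B)=\limsup_n\frac1n|A\cap\{b_1,\dots,b_n\}|$ and $\mu_{\rm low}(A,B)=\liminf_n\frac1n|A\cap\{b_1,\dots,b_n\}|$. For $x\in U$, $\sigma(x,L)=j$ if $x=\ell_j$ and $0$ if $x\notin L$. A sequence $x_1,x_2,\dots$ of distinct elements of $U$ is an $M$-bounded displacement enumeration with respect to $L$ if there is $n^\star$ with $\sigma(x_n,L)\le Mn$ for all $n\ge n^\star$. *)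

theory Defs
  imports "HOL-Analysis.Analysis" "HOL-Library.Liminf_Limsup"
begin

text \<open>A language is an infinite subset of the naturals. Its canonical enumeration
  l_1 < l_2 < ... is given (1-indexed) by l_j = enumerate L (j - 1).\<close>

definition language :: "nat set \<Rightarrow> bool" where
  "language L \<longleftrightarrow> infinite L"

definition canon :: "nat set \<Rightarrow> nat \<Rightarrow> nat" where
  "canon L j = enumerate L (j - 1)"

definition prefix :: "nat set \<Rightarrow> nat \<Rightarrow> nat set" where
  "prefix B n = canon B ` {1..n}"

definition mu_up :: "nat set \<Rightarrow> nat set \<Rightarrow> ereal" where
  "mu_up A B = limsup (\<lambda>n. ereal (real (card (A \<inter> prefix B n)) / real n))"

definition mu_low :: "nat set \<Rightarrow> nat set \<Rightarrow> ereal" where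
  "mu_low A B = liminf (\<lambda>n. ereal (real (card (A \<inter> prefix B n)) / real n))"

definition sigma :: "nat \<Rightarrow> nat set \<Rightarrow> nat" where
  "sigma x L = (if x \<in> L then (THE j. j \<ge> 1 \<and> canon L j = x) else 0)"

text \<open>A sequence x_1, x_2, ... (x 0 is ignored) of distinct elements is an
  M-bounded displacement enumeration w.r.t. L.\<close>
definition bounded_disp_enum :: "real \<Rightarrow> (nat \<Rightarrow> nat) \<Rightarrow> nat set \<Rightarrow> bool" where
  "bounded_disp_enum M x L \<longleftrightarrow>
     inj_on x {1..} \<and>
     (\<exists>nstar. \<forall>n. n \<ge> 1 \<and> n \<ge> nstar \<longrightarrow> real (sigma (x n) L) \<le> M * real n)"

end

theory Submission
  imports Defs
begin

lemma sigma_prop: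
  assumes "infinite K" "v \<in> K"
  shows "sigma v K \<ge> 1 \<and> canon K (sigma v K) = v"
proof -
  obtain k where k: "enumerate K k = v" using enumerate_Ex[OF assms] by blast
  have sm: "strict_mono (enumerate K)" using strict_mono_enumerate[OF assms(1)] .
  have "\<exists>!j. j \<ge> 1 \<and> canon K j = v"
  proof
    show "Suc k \<ge> 1 \<and> canon K (Suc k) = v" using k by (simp add: canon_def)
  next
    fix j assume "j \<ge> 1 \<and> canon K j = v"
    then have "enumerate K (j - 1) = enumerate K k" "j \<ge> 1" using k by (auto simp: canon_def)
    then have "j - 1 = k" using strict_mono_eq[OF sm] by blast
    then show "j = Suc k" using \<open>j \<ge> 1\<close> by simp
  qed
  then have "(THE j. j \<ge> 1 \<and> canon K j = v) \<ge> 1 \<and> canon K (THE j. j \<ge> 1 \<and> canon K j = v) = v"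
    by (rule theI')
  then show ?thesis unfolding sigma_def using assms(2) by simp
qed

lemma key_card:
  fixes M :: real
  assumes "infinite K" "L \<subseteq> K"
    and ns: "\<forall>n. n \<ge> 1 \<and> n \<ge> nstar \<longrightarrow> real (sigma (x n) K) \<le> M * real n"
    and Mn: "M * real n \<le> real m" and M: "M \<ge> 1"
  shows "real (card (L \<inter> x ` {1..n})) \<le> real (card (L \<inter> prefix K m)) + real nstar"
proof -
  have sub: "L \<inter> x ` {1..n} \<subseteq> x ` {..<nstar} \<union> (L \<inter> prefix K m)"
  proof
    fix v assume v: "v \<in> L \<inter> x ` {1..n}"
    then obtain i where i: "i \<in> {1..n}" "v = x i" "v \<in> L" by auto
    show "v \<in> x ` {..<nstar} \<union> (L \<inter> prefix K m)"
    proof (cases "i < nstar")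
      case True then show ?thesis using i by auto
    next
      case False
      have vK: "v \<in> K" using i assms(2) by auto
      have "real (sigma v K) \<le> M * real i" using ns False i by auto
      also have "\<dots> \<le> M * real n" using i M by simp
      finally have "sigma v K \<le> m" using Mn by linarith
      moreover have "sigma v K \<ge> 1" "canon K (sigma v K) = v" using sigma_prop[OF assms(1) vK] by auto
      ultimately have "v \<in> prefix K m"
        unfolding prefix_def by (intro image_eqI[of v _ "sigma v K"]) auto
      then show ?thesis using i by auto
    qed
  qed
  have "card (L \<inter> x ` {1..n}) \<le> card (x ` {..<nstar} \<union> (L \<inter> prefix K m))"
    by (rule card_mono[OF _ sub]) (auto simp: prefix_def)
  also have "\<dots> \<le> card (x ` {..<nstar}) + card (L \<inter> prefix K m)" by (rule card_Un_le)
  also have "\<dots> \<le> nstar + card (L \<inter> prefix K m)"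
    using card_image_le[of "{..<nstar}" x] by simp
  finally show ?thesis by simp
qed


lemma lim_low:
  fixes a c :: "nat \<Rightarrow> real" and M C :: real
  assumes M: "M \<ge> 1" and key: "\<And>n m. M * real n \<le> real m \<Longrightarrow> a n \<le> c m + C"
    and a0: "\<And>n. 0 \<le> a n" and a1: "\<And>n. a n \<le> real n" and c0: "\<And>m. 0 \<le> c m"
  shows "ereal (1/M) * liminf (\<lambda>n. ereal (a n / real n)) \<le> liminf (\<lambda>m. ereal (c m / real m))"
proof (rule dense_le)
  fix y assume y: "y < ereal (1/M) * liminf (\<lambda>n. ereal (a n / real n))"
  let ?A = "liminf (\<lambda>n. ereal (a n / real n))"
  have fpos: "0 \<le> liminf (\<lambda>m. ereal (c m / real m))"
    by (rule Liminf_bounded) (simp add: c0)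
  show "y \<le> liminf (\<lambda>m. ereal (c m / real m))"
  proof (cases "y \<le> 0")
    case True then show ?thesis using fpos by simp
  next
    case False
    then obtain r where yr: "y = ereal r" and r0: "r > 0" using y
      by (cases y) auto
    have A1: "?A \<le> 1"
    proof -
      have "?A \<le> limsup (\<lambda>n. ereal (a n / real n))" by (rule Liminf_le_Limsup) simp
      also have "\<dots> \<le> 1"
        by (rule Limsup_bounded) (auto simp: a1 a0 divide_le_eq_1 intro!: always_eventually)
      finally show ?thesis .
    qed
    have A0: "0 \<le> ?A" by (rule Liminf_bounded) (simp add: a0)
    obtain \<alpha> where al: "?A = ereal \<alpha>" using A0 A1 by (cases ?A) auto
    have rlt: "M * r < \<alpha>" using y yr al M by (simp add: field_simps)
    define z where "z = (M * r + \<alpha>) / 2"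
    have z1: "M * r < z" and z2: "z < \<alpha>" using rlt by (auto simp: z_def)
    have zpos: "z > 0" using z1 r0 M by (smt (verit) mult_pos_pos)
    have "ereal z < (SUP N. INF m\<in>{N..}. ereal (a m / real m))"
      using z2 al liminf_SUP_INF[of "\<lambda>n. ereal (a n / real n)"] by simp
    then obtain N where "ereal z < (INF m\<in>{N..}. ereal (a m / real m))"
      by (auto simp: less_SUP_iff)
    then have N: "\<And>n. n \<ge> N \<Longrightarrow> z < a n / real n"
      by (auto dest: less_INF_D)
    define d where "d = z / M - r"
    have dpos: "d > 0" using z1 M by (simp add: d_def field_simps)
    define N2 where "N2 = nat \<lceil>max ((z + C) / d) (M * (real N + 1))\<rceil> + 1"
    have ev: "ereal r \<le> ereal (c m / real m)" if m: "m \<ge> N2" for m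
    proof -
      define n where "n = nat \<lfloor>real m / M\<rfloor>"
      have mpos: "real m > 0" using m by (simp add: N2_def)
      have m1: "real m \<ge> (z + C) / d" using m unfolding N2_def by linarith
      have m2: "real m \<ge> M * (real N + 1)" using m unfolding N2_def by linarith
      have "real m / M \<ge> real N + 1" using m2 M by (simp add: field_simps)
      then have nN: "n \<ge> N" unfolding n_def by linarith
      have nle: "real n \<le> real m / M" unfolding n_def using mpos M by simp
      have ngt: "real n > real m / M - 1" unfolding n_def using mpos M by linarith
      have Mn: "M * real n \<le> real m" using nle M by (simp add: field_simps)
      have npos: "real n > 0" using nN \<open>real m / M \<ge> real N + 1\<close> ngt by linarith
      have "z * real n < a n" using N[OF nN] npos by (simp add: field_simps)
      then have "z * real n - C < c m" using key[OF Mn] by linarith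
      moreover have "z * (real m / M - 1) \<le> z * real n" using ngt zpos by simp
      moreover have "r * real m \<le> z * (real m / M - 1) - C"
      proof -
        have "d * real m \<ge> z + C" using m1 dpos by (simp add: field_simps)
        then show ?thesis unfolding d_def using M by (simp add: field_simps)
      qed
      ultimately have "r * real m < c m" by linarith
      then show ?thesis using mpos by (simp add: field_simps)
    qed
    have "ereal r \<le> (INF m\<in>{N2..}. ereal (c m / real m))"
      by (rule INF_greatest) (use ev in auto)
    also have "\<dots> \<le> liminf (\<lambda>m. ereal (c m / real m))"
      unfolding liminf_SUP_INF by (rule SUP_upper) simp
    finally show ?thesis using yr by simp
  qed
qed

lemma lim_up:
  fixes a c :: "nat \<Rightarrow> real" and M C :: real
  assumes M: "M \<ge> 1" and key: "\<And>n m. M * real n \<le> real m \<Longrightarrow> a n \<le> c m + C"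
    and a0: "\<And>n. 0 \<le> a n" and a1: "\<And>n. a n \<le> real n" and c0: "\<And>m. 0 \<le> c m"
  shows "ereal (1/M) * limsup (\<lambda>n. ereal (a n / real n)) \<le> limsup (\<lambda>m. ereal (c m / real m))"
proof (rule dense_le)
  fix y assume y: "y < ereal (1/M) * limsup (\<lambda>n. ereal (a n / real n))"
  let ?A = "limsup (\<lambda>n. ereal (a n / real n))"
  have fpos: "0 \<le> limsup (\<lambda>m. ereal (c m / real m))"
    by (rule le_Limsup) (simp_all add: c0)
  show "y \<le> limsup (\<lambda>m. ereal (c m / real m))"
  proof (cases "y \<le> 0")
    case True then show ?thesis using fpos by simp
  next
    case False
    then obtain r where yr: "y = ereal r" and r0: "r > 0" using y
      by (cases y) auto
    have A1: "?A \<le> 1"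
        by (rule Limsup_bounded) (auto simp: a1 a0 divide_le_eq_1 intro!: always_eventually)
    have A0: "0 \<le> ?A" by (rule le_Limsup) (simp_all add: a0)
    obtain \<alpha> where al: "?A = ereal \<alpha>" using A0 A1 by (cases ?A) auto
    have rlt: "M * r < \<alpha>" using y yr al M by (simp add: field_simps)
    define z where "z = (M * r + \<alpha>) / 2"
    have z1: "M * r < z" and z2: "z < \<alpha>" using rlt by (auto simp: z_def)
    have Fr: "\<exists>n\<ge>N. z < a n / real n" for N
    proof -
      have "ereal z < (INF N. SUP m\<in>{N..}. ereal (a m / real m))"
        using z2 al limsup_INF_SUP[of "\<lambda>n. ereal (a n / real n)"] by simp
      then have "ereal z < (SUP m\<in>{N..}. ereal (a m / real m))"
        by (auto dest: less_INF_D)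
      then show ?thesis by (auto simp: less_SUP_iff)
    qed
    define d where "d = z - M * r"
    have dpos: "d > 0" using z1 by (simp add: d_def)
    have "ereal r \<le> (SUP m\<in>{N..}. ereal (c m / real m))" for N
    proof -
      obtain n where nN: "n \<ge> max (N + 1) (nat \<lceil>(C + r) / d\<rceil>)" and zn: "z < a n / real n"
        using Fr by blast
      define m where "m = nat \<lceil>M * real n\<rceil>"
      have npos: "real n > 0" using nN by simp
      have nC: "real n \<ge> (C + r) / d" using nN by linarith
      have Mn: "M * real n \<le> real m" unfolding m_def by linarith
      have MN0: "M * real n \<ge> 0" using M npos by simp
      have rm: "real m = real_of_int \<lceil>M * real n\<rceil>" unfolding m_def using MN0 by simp
      have Mn2: "real m < M * real n + 1" unfolding rm by linarith
      have nMn: "real n \<le> M * real n" using M npos by simp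
      then have "real N \<le> real m" using Mn nN by linarith
      then have mN: "m \<ge> N" by simp
      have "z * real n < a n" using zn npos by (simp add: field_simps)
      then have "z * real n - C < c m" using key[OF Mn] by linarith
      moreover have "d * real n \<ge> C + r" using nC dpos by (simp add: field_simps)
      moreover have "r * real m \<le> r * (M * real n + 1)" using Mn2 r0 by simp
      ultimately have "r * real m < c m" unfolding d_def by (simp add: algebra_simps)
      moreover have mpos: "real m > 0" using Mn npos nMn by linarith
      ultimately have "ereal r \<le> ereal (c m / real m)" by (simp add: field_simps)
      then show ?thesis using mN by (auto intro: SUP_upper2)
    qed
    then have "ereal r \<le> (INF N. SUP m\<in>{N..}. ereal (c m / real m))"
      by (rule INF_greatest)
    then show ?thesis using yr by (simp add: limsup_INF_SUP)
  qed
qed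


theorem lemma7p6:
  fixes M :: real and x :: "nat \<Rightarrow> nat" and K L :: "nat set"
  assumes "M \<ge> 1"
    and "language K"
    and "bounded_disp_enum M x K"
    and "language L"
    and "L \<subseteq> K"
  shows "mu_low L K \<ge> ereal (1 / M) *
           liminf (\<lambda>n. ereal (real (card (L \<inter> x ` {1..n})) / real n)) \<and>
         mu_up L K \<ge> ereal (1 / M) *
           limsup (\<lambda>n. ereal (real (card (L \<inter> x ` {1..n})) / real n))"
proof -
  have inf: "infinite K" using assms(2) by (simp add: language_def)
  obtain nstar where ns: "\<forall>n. n \<ge> 1 \<and> n \<ge> nstar \<longrightarrow> real (sigma (x n) K) \<le> M * real n"
    using assms(3) by (auto simp: bounded_disp_enum_def)
  have key: "\<And>n m. M * real n \<le> real m \<Longrightarrow>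
      real (card (L \<inter> x ` {1..n})) \<le> real (card (L \<inter> prefix K m)) + real nstar"
    by (rule key_card[OF inf assms(5) ns _ assms(1)])
  have a1: "real (card (L \<inter> x ` {1..n})) \<le> real n" for n
  proof -
    have "card (L \<inter> x ` {1..n}) \<le> card (x ` {1..n})" by (rule card_mono) auto
    also have "\<dots> \<le> card {1..n}" by (rule card_image_le) simp
    finally show ?thesis by simp
  qed
  show ?thesis
    unfolding mu_low_def mu_up_def
    using lim_low[OF assms(1) key _ a1] lim_up[OF assms(1) key _ a1] by simp
qed

end
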